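(* Let $d\ge 1$ and $K\ge 0$ be integers, let $\nu$ be a probability distribution on $\mathcal S$, and let $\pi_0,\pi_1,\ldots,\pi_K\in\Pi$ be an arbitrary sequence of policies. Then \[ \|V^*-V^{\pi_K}\|_{1,\nu}\;\le\;\gamma^{Kd}\,\|V^*-V^{\pi_0}\|_\infty+\sum_{k=1}^{K}\gamma^{(K-k)d}\,\bigl\|T^dV^{\pi_{k-1}}-T_{\pi_k}V^{\pi_{k-1}}\bigr\|_{1,\Lambda_{\nu,k}}, \] where $\Lambda_{\nu,k}=\nu\,(P_{\pi^*})^{(K-k)d}\,\bigl[I-\gamma P_{\pi_k}\bigr]^{-1}$, i.e. $\Lambda_{\nu,k}=\sum_{t=0}^\infty\gamma^t\,\nu\,(P_{\pi^*})^{(K-k)d}(P_{\pi_k})^t$ (a finite nonnegative measure on $\mathcal S$).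
   Context: Consider a discounted infinite-horizon Markov decision process with (measurable) state space $\mathcal S$, finite action set $\mathcal A$, reward function $r:\mathcal S\times\mathcal A\to[0,R_{\max}]$, transition kernel $p(\cdot\mid s,a)$ (a probability measure on $\mathcal S$), and discount factor $\gamma\in[0,1)$. Let $V_{\max}=R_{\max}/(1-\gamma)$ and let $\mathcal F$ be the set of bounded measurable functions $\mathcal S\to[0,V_{\max}]$. Let $\Pi$ be the set of stationary deterministic (measurable) policies $\pi:\mathcal S\to\mathcal A$. For $\pi\in\Pi$, $V^\pi(s)=\mathbf E[\sum_{t\ge0}\gamma^t r(s_t,\pi(s_t))]$ with $s_0=s$, $s_{t+1}\sim p(\cdot\mid s_t,\pi(s_t))$; $V^*(s)=\sup_{\pi\in\Pi}V^\pi(s)$. Operators on $V\in\mathcal F$: $(T_\pi V)(s)=r(s,\pi(s))+\gamma\int V(\tilde s)\,p(d\tilde s\mid s,\pi(s))$; $(TV)(s)=\max_{a\in\mathcal A}[r(s,a)+\gamma\int V(\tilde s)\,p(d\tilde s\mid s,a)]$; $T^d$ denotes the $d$-fold composition of $T$. $(P_\pi V)(s)=\int V(\tilde s)\,p(d\tilde s\mid s,\pi(s))$, and for a measure $\nu$ on $\mathcal S$, $(\nu P_\pi)(d\tilde s)=\int p(d\tilde s\mid s,\pi(s))\,\nu(ds)$. It is assumed that $V^*$ is the unique fixed point of $T$ and that there is an optimal policy $\pi^*\in\Pi$ acting greedily with respect to $V^*$, so $T_{\pi^*}V^*=TV^*=V^*$ and $V^{\pi^*}=V^*$. For a nonnegative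 measure $\mu$ on $\mathcal S$ and measurable $f$, $\|f\|_{1,\mu}=\int_{\mathcal S}|f(s)|\,\mu(ds)$; $\|f\|_\infty=\sup_s|f(s)|$. *)

theory Defs
  imports "HOL-Probability.Probability"
begin

definition mdp :: "'s measure \<Rightarrow> ('s \<Rightarrow> 'a::finite \<Rightarrow> 's measure) \<Rightarrow> ('s \<Rightarrow> 'a \<Rightarrow> real) \<Rightarrow> real \<Rightarrow> real \<Rightarrow> bool" where
  "mdp M p r Rmax g \<longleftrightarrow>
     0 \<le> g \<and> g < 1 \<and>
     (\<forall>a. (\<lambda>s. r s a) \<in> borel_measurable M) \<and>
     (\<forall>s\<in>space M. \<forall>a. 0 \<le> r s a \<and> r s a \<le> Rmax) \<and>
     (\<forall>a. (\<lambda>s. p s a) \<in> M \<rightarrow>\<^sub>M prob_algebra M)"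

definition policies :: "'s measure \<Rightarrow> ('s \<Rightarrow> 'a) set" where
  "policies M = {\<pi>. \<pi> \<in> M \<rightarrow>\<^sub>M count_space UNIV}"

definition Fset :: "'s measure \<Rightarrow> real \<Rightarrow> ('s \<Rightarrow> real) set" where
  "Fset M Vmax = {V. V \<in> borel_measurable M \<and> (\<forall>s\<in>space M. 0 \<le> V s \<and> V s \<le> Vmax)}"

definition Pop :: "('s \<Rightarrow> 'a \<Rightarrow> 's measure) \<Rightarrow> ('s \<Rightarrow> 'a) \<Rightarrow> ('s \<Rightarrow> real) \<Rightarrow> 's \<Rightarrow> real" where
  "Pop p \<pi> V s = integral\<^sup>L (p s (\<pi> s)) V"

definition Tpi :: "('s \<Rightarrow> 'a \<Rightarrow> 's measure) \<Rightarrow> ('s \<Rightarrow> 'a \<Rightarrow> real) \<Rightarrow> real \<Rightarrow> ('s \<Rightarrow> 'a) \<Rightarrow> ('s \<Rightarrow> real) \<Rightarrow> 's \<Rightarrow> real" where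
  "Tpi p r g \<pi> V s = r s (\<pi> s) + g * Pop p \<pi> V s"

definition Topt :: "('s \<Rightarrow> 'a::finite \<Rightarrow> 's measure) \<Rightarrow> ('s \<Rightarrow> 'a \<Rightarrow> real) \<Rightarrow> real \<Rightarrow> ('s \<Rightarrow> real) \<Rightarrow> 's \<Rightarrow> real" where
  "Topt p r g V s = Max (range (\<lambda>a. r s a + g * integral\<^sup>L (p s a) V))"

text \<open>Value of a policy: V^pi(s) = sum_t g^t E[r(s_t, pi(s_t))], where the expected
  reward at time t of the chain started at s is ((P_pi)^t r_pi)(s).\<close>
definition Vpi :: "('s \<Rightarrow> 'a \<Rightarrow> 's measure) \<Rightarrow> ('s \<Rightarrow> 'a \<Rightarrow> real) \<Rightarrow> real \<Rightarrow> ('s \<Rightarrow> 'a) \<Rightarrow> 's \<Rightarrow> real" where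
  "Vpi p r g \<pi> s = (\<Sum>t. g ^ t * ((Pop p \<pi> ^^ t) (\<lambda>s'. r s' (\<pi> s')) s))"

definition Vstar :: "'s measure \<Rightarrow> ('s \<Rightarrow> 'a \<Rightarrow> 's measure) \<Rightarrow> ('s \<Rightarrow> 'a \<Rightarrow> real) \<Rightarrow> real \<Rightarrow> 's \<Rightarrow> real" where
  "Vstar M p r g s = (SUP \<pi>\<in>policies M. Vpi p r g \<pi> s)"

definition mPop :: "('s \<Rightarrow> 'a \<Rightarrow> 's measure) \<Rightarrow> ('s \<Rightarrow> 'a) \<Rightarrow> 's measure \<Rightarrow> 's measure" where
  "mPop p \<pi> \<mu> = \<mu> \<bind> (\<lambda>s. p s (\<pi> s))"

text \<open>Lambda_{nu,k} = sum_t g^t nu (P_pistar)^n (P_pi)^t, with n = (K-k) d.\<close>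
definition Lambda :: "'s measure \<Rightarrow> ('s \<Rightarrow> 'a \<Rightarrow> 's measure) \<Rightarrow> real \<Rightarrow> ('s \<Rightarrow> 'a) \<Rightarrow> ('s \<Rightarrow> 'a) \<Rightarrow> nat \<Rightarrow> 's measure \<Rightarrow> 's measure" where
  "Lambda M p g pistar \<pi> n \<nu> =
     measure_of (space M) (sets M)
       (\<lambda>A. \<Sum>t. ennreal (g ^ t) * emeasure ((mPop p \<pi> ^^ t) ((mPop p pistar ^^ n) \<nu>)) A)"

definition norm1 :: "'s measure \<Rightarrow> ('s \<Rightarrow> real) \<Rightarrow> real" where
  "norm1 \<mu> f = integral\<^sup>L \<mu> (\<lambda>s. \<bar>f s\<bar>)"

definition supnorm :: "'s measure \<Rightarrow> ('s \<Rightarrow> real) \<Rightarrow> real" where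
  "supnorm M f = (SUP s\<in>space M. \<bar>f s\<bar>)"

end

theory Submission imports Defs begin

definition bnd :: "'s measure \<Rightarrow> ('s \<Rightarrow> real) \<Rightarrow> bool" where
  "bnd M f \<longleftrightarrow> f \<in> borel_measurable M \<and> (\<exists>B. \<forall>s\<in>space M. \<bar>f s\<bar> \<le> B)"

definition pm :: "'s measure \<Rightarrow> 's measure \<Rightarrow> bool" where
  "pm M \<mu> \<longleftrightarrow> prob_space \<mu> \<and> sets \<mu> = sets M"

lemma bnd_diff: "bnd M f \<Longrightarrow> bnd M h \<Longrightarrow> bnd M (\<lambda>s. f s - h s)"
  unfolding bnd_def
proof (elim conjE exE, intro conjI)
  fix B C assume "\<forall>s\<in>space M. \<bar>f s\<bar> \<le> B" "\<forall>s\<in>space M. \<bar>h s\<bar> \<le> C"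
  then show "\<exists>B. \<forall>s\<in>space M. \<bar>f s - h s\<bar> \<le> B"
  proof (intro exI[of _ "B + C"] ballI)
    fix s assume "s \<in> space M"
    then have "\<bar>f s\<bar> \<le> B" "\<bar>h s\<bar> \<le> C" using \<open>\<forall>s\<in>space M. \<bar>f s\<bar> \<le> B\<close> \<open>\<forall>s\<in>space M. \<bar>h s\<bar> \<le> C\<close> by auto
    then show "\<bar>f s - h s\<bar> \<le> B + C" by linarith
  qed
qed auto

lemma bnd_add: "bnd M f \<Longrightarrow> bnd M h \<Longrightarrow> bnd M (\<lambda>s. f s + h s)"
  unfolding bnd_def
proof (elim conjE exE, intro conjI)
  fix B C assume "\<forall>s\<in>space M. \<bar>f s\<bar> \<le> B" "\<forall>s\<in>space M. \<bar>h s\<bar> \<le> C"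
  then show "\<exists>B. \<forall>s\<in>space M. \<bar>f s + h s\<bar> \<le> B"
  proof (intro exI[of _ "B + C"] ballI)
    fix s assume "s \<in> space M"
    then have "\<bar>f s\<bar> \<le> B" "\<bar>h s\<bar> \<le> C" using \<open>\<forall>s\<in>space M. \<bar>f s\<bar> \<le> B\<close> \<open>\<forall>s\<in>space M. \<bar>h s\<bar> \<le> C\<close> by auto
    then show "\<bar>f s + h s\<bar> \<le> B + C" by linarith
  qed
qed auto

lemma bnd_abs: "bnd M f \<Longrightarrow> bnd M (\<lambda>s. \<bar>f s\<bar>)"
  unfolding bnd_def by auto

lemma bnd_cmult: "bnd M f \<Longrightarrow> bnd M (\<lambda>s. c * f s)"
  unfolding bnd_def
proof (elim conjE exE, intro conjI)
  fix B assume "\<forall>s\<in>space M. \<bar>f s\<bar> \<le> B"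
  then show "\<exists>B. \<forall>s\<in>space M. \<bar>c * f s\<bar> \<le> B"
  proof (intro exI[of _ "\<bar>c\<bar> * B"] ballI)
    fix s assume "s \<in> space M"
    then have "\<bar>f s\<bar> \<le> B" using \<open>\<forall>s\<in>space M. \<bar>f s\<bar> \<le> B\<close> by auto
    then show "\<bar>c * f s\<bar> \<le> \<bar>c\<bar> * B" by (simp add: abs_mult mult_left_mono)
  qed
qed auto

lemma pm_space: "pm M \<mu> \<Longrightarrow> space \<mu> = space M"
  unfolding pm_def by (metis sets_eq_imp_space_eq)

lemma pm_integrable: assumes "pm M \<mu>" "bnd M f" shows "integrable \<mu> f"
proof -
  interpret prob_space \<mu> using assms(1) by (simp add: pm_def)
  obtain B where B: "\<forall>s\<in>space M. \<bar>f s\<bar> \<le> B" and m: "f \<in> borel_measurable M"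
    using assms(2) by (auto simp: bnd_def)
  have m': "f \<in> borel_measurable \<mu>" using m assms(1) by (simp add: pm_def cong: measurable_cong_sets)
  show ?thesis
    by (rule integrable_const_bound[where B=B]) (use B pm_space[OF assms(1)] m' in auto)
qed

lemma pm_integral_mono: assumes "pm M \<mu>" "bnd M f" "bnd M h" "\<And>s. s \<in> space M \<Longrightarrow> f s \<le> h s"
  shows "integral\<^sup>L \<mu> f \<le> integral\<^sup>L \<mu> h"
  using assms pm_integrable[OF assms(1,2)] pm_integrable[OF assms(1,3)] pm_space[OF assms(1)]
  by (intro integral_mono) auto

lemma pm_integral_le_const: assumes "pm M \<mu>" "bnd M f" "\<And>s. s \<in> space M \<Longrightarrow> f s \<le> c"
  shows "integral\<^sup>L \<mu> f \<le> c"
proof -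
  interpret prob_space \<mu> using assms(1) by (simp add: pm_def)
  show ?thesis using assms pm_integrable[OF assms(1,2)] pm_space[OF assms(1)] by (intro integral_le_const AE_I2) auto
qed

lemma pm_integral_ge_const: assumes "pm M \<mu>" "bnd M f" "\<And>s. s \<in> space M \<Longrightarrow> c \<le> f s"
  shows "c \<le> integral\<^sup>L \<mu> f"
proof -
  interpret prob_space \<mu> using assms(1) by (simp add: pm_def)
  show ?thesis using assms pm_integrable[OF assms(1,2)] pm_space[OF assms(1)] by (intro integral_ge_const AE_I2) auto
qed

lemma pm_integral_diff: assumes "pm M \<mu>" "bnd M f" "bnd M h"
  shows "integral\<^sup>L \<mu> (\<lambda>s. f s - h s) = integral\<^sup>L \<mu> f - integral\<^sup>L \<mu> h"
  using assms pm_integrable by (intro Bochner_Integration.integral_diff) auto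

lemma pm_integral_add: assumes "pm M \<mu>" "bnd M f" "bnd M h"
  shows "integral\<^sup>L \<mu> (\<lambda>s. f s + h s) = integral\<^sup>L \<mu> f + integral\<^sup>L \<mu> h"
  using assms pm_integrable by (intro Bochner_Integration.integral_add) auto

lemma pm_integral_cong: assumes "pm M \<mu>" "\<And>s. s \<in> space M \<Longrightarrow> f s = h s"
  shows "integral\<^sup>L \<mu> f = integral\<^sup>L \<mu> h"
  using assms pm_space[OF assms(1)] by (intro Bochner_Integration.integral_cong) auto

locale mdpL =
  fixes M :: "'s measure" and p :: "'s \<Rightarrow> 'a::finite \<Rightarrow> 's measure"
    and r :: "'s \<Rightarrow> 'a \<Rightarrow> real" and Rmax g :: real
  assumes mdp: "mdp M p r Rmax g"
begin

lemma g0: "0 \<le> g" and g1: "g < 1" using mdp by (auto simp: mdp_def)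

lemma r_meas: "(\<lambda>s. r s a) \<in> borel_measurable M" using mdp by (auto simp: mdp_def)
lemma r_bnd: "s \<in> space M \<Longrightarrow> 0 \<le> r s a \<and> r s a \<le> Rmax" using mdp by (auto simp: mdp_def)
lemma p_meas: "(\<lambda>s. p s a) \<in> M \<rightarrow>\<^sub>M prob_algebra M" using mdp by (auto simp: mdp_def)

lemma p_pm: "s \<in> space M \<Longrightarrow> pm M (p s a)"
  using measurable_space[OF p_meas, of s a] by (auto simp: space_prob_algebra pm_def)

lemma kern: assumes "\<pi> \<in> policies M" shows "(\<lambda>s. p s (\<pi> s)) \<in> M \<rightarrow>\<^sub>M prob_algebra M"
  using measurable_compose_countable[where f="\<lambda>a s. p s a" and g=\<pi>, OF p_meas] assms
  unfolding policies_def by simp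

lemma kern_sub: assumes "\<pi> \<in> policies M" shows "(\<lambda>s. p s (\<pi> s)) \<in> M \<rightarrow>\<^sub>M subprob_algebra M"
  using kern[OF assms] by (rule measurable_prob_algebraD)

lemma rp_meas: assumes "\<pi> \<in> policies M" shows "(\<lambda>s. r s (\<pi> s)) \<in> borel_measurable M"
  using measurable_compose_countable[where f="\<lambda>a s. r s a" and g=\<pi>, OF r_meas] assms
  unfolding policies_def by simp

lemma Pop_meas: assumes "\<pi> \<in> policies M" "f \<in> borel_measurable M"
  shows "Pop p \<pi> f \<in> borel_measurable M"
  unfolding Pop_def
  by (rule measurable_compose[OF kern_sub[OF assms(1)] integral_measurable_subprob_algebra[OF assms(2)]])

lemma Pop_bounds: assumes "\<pi> \<in> policies M" "bnd M f" "\<And>s. s \<in> space M \<Longrightarrow> a \<le> f s \<and> f s \<le> b"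
  "s \<in> space M"
  shows "a \<le> Pop p \<pi> f s \<and> Pop p \<pi> f s \<le> b"
  unfolding Pop_def using p_pm[OF assms(4)] assms
  by (auto intro: pm_integral_le_const pm_integral_ge_const)

lemma Pop_bnd: assumes "\<pi> \<in> policies M" "bnd M f" shows "bnd M (Pop p \<pi> f)"
proof -
  obtain B where B: "\<forall>s\<in>space M. \<bar>f s\<bar> \<le> B" using assms(2) by (auto simp: bnd_def)
  have "\<forall>s\<in>space M. \<bar>Pop p \<pi> f s\<bar> \<le> B"
  proof
    fix s assume s: "s \<in> space M"
    have "- B \<le> Pop p \<pi> f s \<and> Pop p \<pi> f s \<le> B"
      using B by (intro Pop_bounds[OF assms _ s]) (auto simp: abs_le_iff)
    then show "\<bar>Pop p \<pi> f s\<bar> \<le> B" by auto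
  qed
  then show ?thesis using Pop_meas[OF assms(1)] assms(2) by (auto simp: bnd_def)
qed

lemma Pop_diff: assumes "bnd M f" "bnd M h" "s \<in> space M"
  shows "Pop p \<pi> (\<lambda>x. f x - h x) s = Pop p \<pi> f s - Pop p \<pi> h s"
  unfolding Pop_def using p_pm[OF assms(3)] assms by (intro pm_integral_diff)

lemma Pop_cmult: "Pop p \<pi> (\<lambda>x. c * f x) s = c * Pop p \<pi> f s"
  unfolding Pop_def by simp

lemma Pop_mono: assumes "bnd M f" "bnd M h" "s \<in> space M" "\<And>x. x \<in> space M \<Longrightarrow> f x \<le> h x"
  shows "Pop p \<pi> f s \<le> Pop p \<pi> h s"
  unfolding Pop_def using p_pm[OF assms(3)] assms by (intro pm_integral_mono) auto

lemma Pop_cong: assumes "s \<in> space M" "\<And>x. x \<in> space M \<Longrightarrow> f x = h x"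
  shows "Pop p \<pi> f s = Pop p \<pi> h s"
  unfolding Pop_def using p_pm[OF assms(1)] assms by (intro pm_integral_cong) auto


lemma R_props: assumes "\<pi> \<in> policies M"
  shows "bnd M ((Pop p \<pi> ^^ t) (\<lambda>s. r s (\<pi> s))) \<and>
    (\<forall>s\<in>space M. 0 \<le> (Pop p \<pi> ^^ t) (\<lambda>s. r s (\<pi> s)) s \<and> (Pop p \<pi> ^^ t) (\<lambda>s. r s (\<pi> s)) s \<le> Rmax)"
proof (induction t)
  case 0
  have "\<forall>s\<in>space M. \<bar>r s (\<pi> s)\<bar> \<le> Rmax" using r_bnd by auto
  then show ?case using rp_meas[OF assms] r_bnd by (auto simp: bnd_def)
next
  case (Suc t)
  then have b: "bnd M ((Pop p \<pi> ^^ t) (\<lambda>s. r s (\<pi> s)))"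
    and h: "\<And>s. s \<in> space M \<Longrightarrow> 0 \<le> (Pop p \<pi> ^^ t) (\<lambda>s. r s (\<pi> s)) s \<and> (Pop p \<pi> ^^ t) (\<lambda>s. r s (\<pi> s)) s \<le> Rmax"
    by auto
  show ?case using Pop_bnd[OF assms b] Pop_bounds[OF assms b h] by simp
qed

lemma R_sum: assumes "\<pi> \<in> policies M" "s \<in> space M"
  shows "summable (\<lambda>t. g ^ t * (Pop p \<pi> ^^ t) (\<lambda>s. r s (\<pi> s)) s)"
    and "\<And>t. \<bar>g ^ t * (Pop p \<pi> ^^ t) (\<lambda>s. r s (\<pi> s)) s\<bar> \<le> Rmax * g ^ t"
proof -
  show b: "\<bar>g ^ t * (Pop p \<pi> ^^ t) (\<lambda>s. r s (\<pi> s)) s\<bar> \<le> Rmax * g ^ t" for t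
  proof -
    have h: "0 \<le> (Pop p \<pi> ^^ t) (\<lambda>s. r s (\<pi> s)) s" "(Pop p \<pi> ^^ t) (\<lambda>s. r s (\<pi> s)) s \<le> Rmax"
      using R_props[OF assms(1), of t] assms(2) by auto
    have "g ^ t * (Pop p \<pi> ^^ t) (\<lambda>s. r s (\<pi> s)) s \<le> g ^ t * Rmax"
      using h g0 by (intro mult_left_mono) auto
    moreover have "0 \<le> g ^ t * (Pop p \<pi> ^^ t) (\<lambda>s. r s (\<pi> s)) s" using h g0 by simp
    ultimately show ?thesis by (simp add: mult.commute)
  qed
  have "summable (\<lambda>t. Rmax * g ^ t)" using g0 g1 by (intro summable_mult summable_geometric) auto
  then show "summable (\<lambda>t. g ^ t * (Pop p \<pi> ^^ t) (\<lambda>s. r s (\<pi> s)) s)"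
    by (rule summable_comparison_test'[where N=0]) (use b in auto)
qed

lemma geo_sum: "(\<Sum>t. Rmax * g ^ t) = Rmax / (1 - g)"
proof -
  have "(\<Sum>t. g ^ t) = 1 / (1 - g)" using g0 g1 by (intro suminf_geometric) auto
  moreover have "(\<Sum>t. Rmax * g ^ t) = Rmax * (\<Sum>t. g ^ t)"
    using g0 g1 by (intro suminf_mult summable_geometric) auto
  ultimately show ?thesis by simp
qed

lemma Vpi_bounds: assumes "\<pi> \<in> policies M" "s \<in> space M"
  shows "0 \<le> Vpi p r g \<pi> s \<and> Vpi p r g \<pi> s \<le> Rmax / (1 - g)"
proof
  show "0 \<le> Vpi p r g \<pi> s" unfolding Vpi_def
    using R_sum[OF assms] R_props[OF assms(1)] assms(2) g0 by (intro suminf_nonneg) auto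
  have "summable (\<lambda>t. Rmax * g ^ t)" using g0 g1 by (intro summable_mult summable_geometric) auto
  then have "Vpi p r g \<pi> s \<le> (\<Sum>t. Rmax * g ^ t)" unfolding Vpi_def
    using R_sum[OF assms] by (intro suminf_le) (auto dest: abs_le_D1)
  then show "Vpi p r g \<pi> s \<le> Rmax / (1 - g)" using geo_sum by simp
qed

lemma Vpi_meas: assumes "\<pi> \<in> policies M" shows "Vpi p r g \<pi> \<in> borel_measurable M"
proof -
  have e: "Vpi p r g \<pi> = (\<lambda>s. \<Sum>t. g ^ t * (Pop p \<pi> ^^ t) (\<lambda>s. r s (\<pi> s)) s)"
    by (rule ext) (simp add: Vpi_def)
  show ?thesis unfolding e
    using R_props[OF assms] by (intro borel_measurable_suminf borel_measurable_times) (auto simp: bnd_def)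
qed

lemma Vpi_bnd: assumes "\<pi> \<in> policies M" shows "bnd M (Vpi p r g \<pi>)"
  unfolding bnd_def using Vpi_meas[OF assms] Vpi_bounds[OF assms]
  by (intro conjI exI[of _ "Rmax / (1 - g)"]) auto

lemma Vpi_fix: assumes "\<pi> \<in> policies M" "s \<in> space M"
  shows "Tpi p r g \<pi> (Vpi p r g \<pi>) s = Vpi p r g \<pi> s"
proof -
  define R where "R t = (Pop p \<pi> ^^ t) (\<lambda>s. r s (\<pi> s))" for t
  define \<kappa> where "\<kappa> = p s (\<pi> s)"
  have pk: "pm M \<kappa>" unfolding \<kappa>_def using p_pm[OF assms(2)] .
  have Rb: "bnd M (R t)" "\<And>x. x \<in> space M \<Longrightarrow> 0 \<le> R t x \<and> R t x \<le> Rmax" for t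
    using R_props[OF assms(1), of t] unfolding R_def by auto
  have e: "Vpi p r g \<pi> = (\<lambda>x. \<Sum>t. g ^ t * R t x)"
    by (rule ext) (simp add: Vpi_def R_def)
  have RSuc: "R (Suc t) = Pop p \<pi> (R t)" for t by (simp add: R_def)
  have int: "integrable \<kappa> (\<lambda>x. g ^ t * R t x)" for t
    using pm_integrable[OF pk bnd_cmult[OF Rb(1)]] .
  have "(\<integral>x. (\<Sum>t. g ^ t * R t x) \<partial>\<kappa>) = (\<Sum>t. integral\<^sup>L \<kappa> (\<lambda>x. g ^ t * R t x))"
  proof (rule integral_suminf)
    show "integrable \<kappa> (\<lambda>x. g ^ t * R t x)" for t by (rule int)
    show "AE x in \<kappa>. summable (\<lambda>t. norm (g ^ t * R t x))"
    proof (rule AE_I2)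
      fix x assume "x \<in> space \<kappa>"
      then have x: "x \<in> space M" using pm_space[OF pk] by simp
      show "summable (\<lambda>t. norm (g ^ t * R t x))"
      proof (rule summable_comparison_test'[where N=0])
        show "summable (\<lambda>t. Rmax * g ^ t)" using g0 g1 by (intro summable_mult summable_geometric) auto
        show "norm (norm (g ^ t * R t x)) \<le> Rmax * g ^ t" for t
          using R_sum(2)[OF assms(1) x, of t] unfolding R_def by simp
      qed
    qed
    have bd: "norm (integral\<^sup>L \<kappa> (\<lambda>x. norm (g ^ t * R t x))) \<le> Rmax * g ^ t" for t
    proof -
      have bn: "bnd M (\<lambda>x. \<bar>g ^ t * R t x\<bar>)" using bnd_abs[OF bnd_cmult[OF Rb(1)]] .
      have "integral\<^sup>L \<kappa> (\<lambda>x. \<bar>g ^ t * R t x\<bar>) \<le> Rmax * g ^ t"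
        by (rule pm_integral_le_const[OF pk bn]) (use R_sum(2)[OF assms(1)] in \<open>simp add: R_def\<close>)
      moreover have "0 \<le> integral\<^sup>L \<kappa> (\<lambda>x. \<bar>g ^ t * R t x\<bar>)" by (rule Bochner_Integration.integral_nonneg) simp
      ultimately show ?thesis by simp
    qed
    show "summable (\<lambda>t. integral\<^sup>L \<kappa> (\<lambda>x. norm (g ^ t * R t x)))"
    proof (rule summable_comparison_test'[where N=0])
      show "summable (\<lambda>t. Rmax * g ^ t)" using g0 g1 by (intro summable_mult summable_geometric) auto
      show "norm (integral\<^sup>L \<kappa> (\<lambda>x. norm (g ^ t * R t x))) \<le> Rmax * g ^ t" for t by (rule bd)
    qed
  qed
  also have "\<dots> = (\<Sum>t. g ^ t * R (Suc t) s)"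
  proof -
    have "integral\<^sup>L \<kappa> (\<lambda>x. g ^ t * R t x) = g ^ t * R (Suc t) s" for t
      by (simp add: RSuc Pop_def \<kappa>_def)
    then show ?thesis by (simp only:)
  qed
  finally have P: "Pop p \<pi> (Vpi p r g \<pi>) s = (\<Sum>t. g ^ t * R (Suc t) s)"
    unfolding Pop_def e \<kappa>_def .
  have sm: "summable (\<lambda>t. g ^ t * R t s)" using R_sum(1)[OF assms] unfolding R_def .
  have sm2: "summable (\<lambda>t. g ^ t * R (Suc t) s)"
  proof (rule summable_comparison_test'[where N=0])
    show "summable (\<lambda>t. Rmax * g ^ t)" using g0 g1 by (intro summable_mult summable_geometric) auto
    show "norm (g ^ t * R (Suc t) s) \<le> Rmax * g ^ t" for t
    proof -
      have h: "0 \<le> R (Suc t) s" "R (Suc t) s \<le> Rmax" using Rb(2)[OF assms(2), of "Suc t"] by auto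
      have "g ^ t * R (Suc t) s \<le> g ^ t * Rmax" using h g0 by (intro mult_left_mono) auto
      moreover have "0 \<le> g ^ t * R (Suc t) s" using h g0 by simp
      ultimately show ?thesis by (simp add: mult.commute)
    qed
  qed
  have "Vpi p r g \<pi> s = R 0 s + (\<Sum>t. g ^ Suc t * R (Suc t) s)"
    using suminf_split_head[OF sm] e by simp
  also have "(\<Sum>t. g ^ Suc t * R (Suc t) s) = (\<Sum>t. g * (g ^ t * R (Suc t) s))"
    by (simp add: mult.assoc)
  also have "\<dots> = g * (\<Sum>t. g ^ t * R (Suc t) s)"
    by (rule suminf_mult[OF sm2])
  also have "R 0 s = r s (\<pi> s)" by (simp add: R_def)
  finally show ?thesis unfolding Tpi_def P by simp
qed

lemma Topt_meas: assumes "bnd M V" shows "Topt p r g V \<in> borel_measurable M"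
proof -
  have e: "Topt p r g V = (\<lambda>s. Max ((\<lambda>a. r s a + g * integral\<^sup>L (p s a) V) ` UNIV))"
    by (rule ext) (simp add: Topt_def)
  have "(\<lambda>s. r s a + g * integral\<^sup>L (p s a) V) \<in> borel_measurable M" for a
    using assms r_meas
    by (intro borel_measurable_add borel_measurable_times borel_measurable_const
        measurable_compose[OF measurable_prob_algebraD[OF p_meas] integral_measurable_subprob_algebra])
       (auto simp: bnd_def)
  then show ?thesis unfolding e by (intro borel_measurable_Max) auto
qed

lemma Topt_attained: "\<exists>a. Topt p r g V s = r s a + g * integral\<^sup>L (p s a) V"
proof -
  have "Max ((\<lambda>a. r s a + g * integral\<^sup>L (p s a) V) ` UNIV) \<in> (\<lambda>a. r s a + g * integral\<^sup>L (p s a) V) ` UNIV"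
    by (intro Max_in) auto
  then have "\<exists>a\<in>UNIV. Max ((\<lambda>a. r s a + g * integral\<^sup>L (p s a) V) ` UNIV) = r s a + g * integral\<^sup>L (p s a) V"
    by (simp only: image_iff)
  then show ?thesis unfolding Topt_def by simp
qed

lemma Topt_ge: "r s a + g * integral\<^sup>L (p s a) V \<le> Topt p r g V s"
  unfolding Topt_def by (intro Max_ge) auto

lemma Tpi_le_Topt: "Tpi p r g \<pi> V s \<le> Topt p r g V s"
  unfolding Tpi_def Pop_def by (rule Topt_ge)

lemma Topt_bnd: assumes "bnd M V" shows "bnd M (Topt p r g V)"
proof -
  obtain B where B: "\<forall>s\<in>space M. \<bar>V s\<bar> \<le> B" using assms by (auto simp: bnd_def)
  have "\<bar>Topt p r g V s\<bar> \<le> Rmax + g * B" if s: "s \<in> space M" for s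
  proof -
    obtain a where a: "Topt p r g V s = r s a + g * integral\<^sup>L (p s a) V" using Topt_attained by blast
    have "-B \<le> integral\<^sup>L (p s a) V \<and> integral\<^sup>L (p s a) V \<le> B"
      using B by (auto intro!: pm_integral_le_const[OF p_pm[OF s] assms] pm_integral_ge_const[OF p_pm[OF s] assms]
          simp: abs_le_iff)
    then have "\<bar>g * integral\<^sup>L (p s a) V\<bar> \<le> g * B" using g0
      by (auto simp: abs_mult abs_le_iff intro: mult_left_mono)
    moreover have "0 \<le> r s a \<and> r s a \<le> Rmax" using r_bnd[OF s] .
    ultimately show ?thesis unfolding a by linarith
  qed
  then show ?thesis using Topt_meas[OF assms] by (auto simp: bnd_def)
qed

lemma Topt_mono: assumes "bnd M V" "bnd M W" "\<And>x. x \<in> space M \<Longrightarrow> V x \<le> W x" "s \<in> space M"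
  shows "Topt p r g V s \<le> Topt p r g W s"
proof -
  obtain a where a: "Topt p r g V s = r s a + g * integral\<^sup>L (p s a) V" using Topt_attained by blast
  have "integral\<^sup>L (p s a) V \<le> integral\<^sup>L (p s a) W"
    using assms by (intro pm_integral_mono[OF p_pm[OF assms(4)]]) auto
  then have "Topt p r g V s \<le> r s a + g * integral\<^sup>L (p s a) W" unfolding a using g0
    by (simp add: mult_left_mono)
  also have "\<dots> \<le> Topt p r g W s" by (rule Topt_ge)
  finally show ?thesis .
qed

lemma Toptpow_bnd: "bnd M V \<Longrightarrow> bnd M ((Topt p r g ^^ j) V)"
  by (induction j) (auto intro: Topt_bnd)

lemma Vpi_le_Toptpow: assumes "\<pi> \<in> policies M"
  shows "\<forall>s\<in>space M. Vpi p r g \<pi> s \<le> (Topt p r g ^^ j) (Vpi p r g \<pi>) s"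
proof (induction j)
  case (Suc j)
  show ?case
  proof
    fix s assume s: "s \<in> space M"
    have "Vpi p r g \<pi> s = Tpi p r g \<pi> (Vpi p r g \<pi>) s" using Vpi_fix[OF assms s] by simp
    also have "\<dots> \<le> Topt p r g (Vpi p r g \<pi>) s" by (rule Tpi_le_Topt)
    also have "\<dots> \<le> Topt p r g ((Topt p r g ^^ j) (Vpi p r g \<pi>)) s"
      using Suc Vpi_bnd[OF assms] Toptpow_bnd s by (intro Topt_mono) auto
    finally show "Vpi p r g \<pi> s \<le> (Topt p r g ^^ Suc j) (Vpi p r g \<pi>) s" by simp
  qed
qed simp

lemma Tpi_diff: assumes "bnd M V" "bnd M W" "s \<in> space M"
  shows "Tpi p r g \<pi> V s - Tpi p r g \<pi> W s = g * Pop p \<pi> (\<lambda>x. V x - W x) s"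
  unfolding Tpi_def Pop_diff[OF assms] by (simp add: right_diff_distrib)


lemma kern_sub_pm: assumes "\<pi> \<in> policies M" "pm M \<mu>"
  shows "(\<lambda>s. p s (\<pi> s)) \<in> \<mu> \<rightarrow>\<^sub>M subprob_algebra M"
proof -
  have "measurable \<mu> (subprob_algebra M) = measurable M (subprob_algebra M)"
    using assms(2) by (intro measurable_cong_sets) (auto simp: pm_def)
  then show ?thesis using kern_sub[OF assms(1)] by simp
qed

lemma mPop_pm: assumes "\<pi> \<in> policies M" "pm M \<mu>" shows "pm M (mPop p \<pi> \<mu>)"
proof -
  interpret prob_space \<mu> using assms(2) by (simp add: pm_def)
  have k: "(\<lambda>s. p s (\<pi> s)) \<in> \<mu> \<rightarrow>\<^sub>M subprob_algebra M" by (rule kern_sub_pm[OF assms])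
  have ps: "\<And>x. x \<in> space \<mu> \<Longrightarrow> pm M (p x (\<pi> x))"
    using p_pm pm_space[OF assms(2)] by auto
  have "prob_space (\<mu> \<bind> (\<lambda>s. p s (\<pi> s)))"
    by (rule prob_space_bind[OF _ k]) (use ps in \<open>auto simp: pm_def intro!: AE_I2\<close>)
  moreover have "sets (\<mu> \<bind> (\<lambda>s. p s (\<pi> s))) = sets M"
    by (rule sets_bind) (use ps not_empty in \<open>auto simp: pm_def\<close>)
  ultimately show ?thesis by (simp add: pm_def mPop_def)
qed

lemma mPop_pow_pm: assumes "\<pi> \<in> policies M" "pm M \<mu>" shows "pm M ((mPop p \<pi> ^^ j) \<mu>)"
  by (induction j) (auto intro: mPop_pm[OF assms(1)] simp: assms(2))

lemma Ppow_bnd: assumes "\<pi> \<in> policies M" "bnd M f" shows "bnd M ((Pop p \<pi> ^^ j) f)"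
  by (induction j) (auto intro: Pop_bnd[OF assms(1)] simp: assms(2))

lemma integral_mPop: assumes "\<pi> \<in> policies M" "pm M \<mu>" "bnd M f"
  shows "integral\<^sup>L \<mu> (Pop p \<pi> f) = integral\<^sup>L (mPop p \<pi> \<mu>) f"
proof -
  interpret prob_space \<mu> using assms(2) by (simp add: pm_def)
  obtain B where B: "\<And>s. s \<in> space M \<Longrightarrow> \<bar>f s\<bar> \<le> B" and fm: "f \<in> borel_measurable M"
    using assms(3) by (auto simp: bnd_def)
  have ps: "\<And>x. x \<in> space \<mu> \<Longrightarrow> pm M (p x (\<pi> x))"
    using p_pm pm_space[OF assms(2)] by auto
  have "integral\<^sup>L (\<mu> \<bind> (\<lambda>s. p s (\<pi> s))) f = (\<integral>x. integral\<^sup>L (p x (\<pi> x)) f \<partial>\<mu>)"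
  proof (rule integral_bind[where K=M and B=B and B'=1])
    show "f \<in> borel_measurable M" by (rule fm)
    show "\<And>x. x \<in> space M \<Longrightarrow> \<bar>f x\<bar> \<le> B" by (rule B)
    show "(\<lambda>s. p s (\<pi> s)) \<in> \<mu> \<rightarrow>\<^sub>M subprob_algebra M" by (rule kern_sub_pm[OF assms(1,2)])
    show "finite_measure \<mu>" by unfold_locales
    show "AE x in \<mu>. emeasure (p x (\<pi> x)) (space (p x (\<pi> x))) \<le> ennreal 1"
      by (rule AE_I2) (use ps in \<open>auto simp: pm_def prob_space.emeasure_space_1\<close>)
  qed
  then show ?thesis by (simp add: mPop_def Pop_def[abs_def])
qed

lemma integral_Ppow: assumes "\<pi> \<in> policies M" "pm M \<mu>" "bnd M f"
  shows "integral\<^sup>L \<mu> ((Pop p \<pi> ^^ j) f) = integral\<^sup>L ((mPop p \<pi> ^^ j) \<mu>) f"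
  using assms(2)
proof (induction j arbitrary: \<mu>)
  case (Suc j)
  have "integral\<^sup>L \<mu> ((Pop p \<pi> ^^ Suc j) f) = integral\<^sup>L \<mu> (Pop p \<pi> ((Pop p \<pi> ^^ j) f))" by simp
  also have "\<dots> = integral\<^sup>L (mPop p \<pi> \<mu>) ((Pop p \<pi> ^^ j) f)"
    by (rule integral_mPop[OF assms(1) Suc.prems Ppow_bnd[OF assms(1,3)]])
  also have "\<dots> = integral\<^sup>L ((mPop p \<pi> ^^ j) (mPop p \<pi> \<mu>)) f"
    by (rule Suc.IH[OF mPop_pm[OF assms(1) Suc.prems]])
  also have "(mPop p \<pi> ^^ j) (mPop p \<pi> \<mu>) = (mPop p \<pi> ^^ Suc j) \<mu>"
    by (simp only: funpow_Suc_right comp_def)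
  finally show ?case .
qed simp

lemma chain: assumes ps: "pistar \<in> policies M" and Vs: "bnd M Vs"
  and fx: "\<And>s. s \<in> space M \<Longrightarrow> Tpi p r g pistar Vs s = Vs s" and V: "bnd M V"
  shows "\<forall>s\<in>space M. Vs s - (Topt p r g ^^ j) V s \<le> g ^ j * (Pop p pistar ^^ j) (\<lambda>x. Vs x - V x) s"
proof (induction j)
  case 0
  then show ?case by simp
next
  case (Suc j)
  show ?case
  proof
    fix s assume s: "s \<in> space M"
    define W where "W = (Topt p r g ^^ j) V"
    define Q where "Q = (Pop p pistar ^^ j) (\<lambda>x. Vs x - V x)"
    have W: "bnd M W" unfolding W_def by (rule Toptpow_bnd[OF V])
    have Q: "bnd M Q" unfolding Q_def by (rule Ppow_bnd[OF ps bnd_diff[OF Vs V]])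
    have IH: "\<And>x. x \<in> space M \<Longrightarrow> Vs x - W x \<le> g ^ j * Q x"
      using Suc.IH unfolding W_def Q_def by auto
    have "Vs s - (Topt p r g ^^ Suc j) V s = Vs s - Topt p r g W s" by (simp add: W_def)
    also have "\<dots> \<le> Tpi p r g pistar Vs s - Tpi p r g pistar W s"
      using fx[OF s] Tpi_le_Topt[of pistar W s] by linarith
    also have "\<dots> = g * Pop p pistar (\<lambda>x. Vs x - W x) s" by (rule Tpi_diff[OF Vs W s])
    also have "\<dots> \<le> g * Pop p pistar (\<lambda>x. g ^ j * Q x) s"
      using IH g0 by (intro mult_left_mono Pop_mono[OF bnd_diff[OF Vs W] bnd_cmult[OF Q] s]) auto
    also have "\<dots> = g ^ Suc j * (Pop p pistar ^^ Suc j) (\<lambda>x. Vs x - V x) s"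
      by (simp add: Pop_cmult Q_def)
    finally show "Vs s - (Topt p r g ^^ Suc j) V s \<le> g ^ Suc j * (Pop p pistar ^^ Suc j) (\<lambda>x. Vs x - V x) s" .
  qed
qed


lemma Lambda_integral: assumes pi: "\<pi> \<in> policies M" and mu: "pm M \<mu>0" and f: "bnd M f"
  and nn: "\<And>s. s \<in> space M \<Longrightarrow> 0 \<le> f s"
  shows "integral\<^sup>L (measure_of (space M) (sets M)
       (\<lambda>A. \<Sum>t. ennreal (g ^ t) * emeasure ((mPop p \<pi> ^^ t) \<mu>0) A)) f
     = (\<Sum>t. g ^ t * integral\<^sup>L ((mPop p \<pi> ^^ t) \<mu>0) f)"
    and "summable (\<lambda>t. g ^ t * integral\<^sup>L ((mPop p \<pi> ^^ t) \<mu>0) f)"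
proof -
  define N where "N t = (mPop p \<pi> ^^ t) \<mu>0" for t
  define D where "D = density (count_space (UNIV::nat set)) (\<lambda>t. ennreal (g ^ t))"
  define C where "C = D \<bind> N"
  have Npm: "pm M (N t)" for t unfolding N_def by (rule mPop_pow_pm[OF pi mu])
  have Nm: "N \<in> D \<rightarrow>\<^sub>M subprob_algebra M"
    unfolding D_def using Npm by (auto simp: space_subprob_algebra pm_def prob_space_imp_subprob_space)
  have Dne: "space D \<noteq> {}" by (simp add: D_def)
  have sC: "sets C = sets M" unfolding C_def
    by (rule sets_bind) (use Npm Dne in \<open>auto simp: pm_def\<close>)
  have spC: "space C = space M" using sC by (rule sets_eq_imp_space_eq)
  have emC: "emeasure C A = (\<Sum>t. ennreal (g ^ t) * emeasure (N t) A)" if A: "A \<in> sets M" for A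
  proof -
    have "emeasure C A = (\<integral>\<^sup>+t. emeasure (N t) A \<partial>D)"
      unfolding C_def by (rule emeasure_bind[OF Dne Nm A])
    also have "\<dots> = (\<integral>\<^sup>+t. ennreal (g ^ t) * emeasure (N t) A \<partial>count_space UNIV)"
      unfolding D_def by (rule nn_integral_density) auto
    also have "\<dots> = (\<Sum>t. ennreal (g ^ t) * emeasure (N t) A)"
      by (rule nn_integral_count_space_nat)
    finally show ?thesis .
  qed
  have LC: "measure_of (space M) (sets M) (\<lambda>A. \<Sum>t. ennreal (g ^ t) * emeasure (N t) A) = C"
  proof -
    have "measure_of (space M) (sets M) (\<lambda>A. \<Sum>t. ennreal (g ^ t) * emeasure (N t) A)
        = measure_of (space M) (sets M) (emeasure C)"
      by (rule measure_of_eq) (auto simp: sets.space_closed sets.sigma_sets_eq emC)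
    also have "\<dots> = C" using measure_of_of_measure[of C] by (simp add: sC spC)
    finally show ?thesis .
  qed
  obtain B where B: "\<And>s. s \<in> space M \<Longrightarrow> \<bar>f s\<bar> \<le> B" and fm: "f \<in> borel_measurable M"
    using f by (auto simp: bnd_def)
  have ib: "0 \<le> integral\<^sup>L (N t) f \<and> integral\<^sup>L (N t) f \<le> B" for t
    using B nn by (auto intro!: pm_integral_le_const[OF Npm f] pm_integral_ge_const[OF Npm f] dest: abs_le_D1)
  have sm: "summable (\<lambda>t. g ^ t * integral\<^sup>L (N t) f)"
  proof (rule summable_comparison_test'[where N=0])
    show "summable (\<lambda>t. B * g ^ t)" using g0 g1 by (intro summable_mult summable_geometric) auto
    show "norm (g ^ t * integral\<^sup>L (N t) f) \<le> B * g ^ t" for t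
    proof -
      have "g ^ t * integral\<^sup>L (N t) f \<le> g ^ t * B" using ib[of t] g0 by (intro mult_left_mono) auto
      moreover have "0 \<le> g ^ t * integral\<^sup>L (N t) f" using ib[of t] g0 by simp
      ultimately show ?thesis by (simp add: mult.commute)
    qed
  qed
  then show "summable (\<lambda>t. g ^ t * integral\<^sup>L ((mPop p \<pi> ^^ t) \<mu>0) f)" by (simp add: N_def)
  have fmC: "f \<in> borel_measurable C" using fm sC by (simp cong: measurable_cong_sets)
  have "integral\<^sup>L C f = enn2real (\<integral>\<^sup>+x. ennreal (f x) \<partial>C)"
    by (rule integral_eq_nn_integral[OF fmC]) (use nn spC in \<open>auto intro!: AE_I2\<close>)
  also have "(\<integral>\<^sup>+x. ennreal (f x) \<partial>C) = (\<integral>\<^sup>+t. \<integral>\<^sup>+x. ennreal (f x) \<partial>N t \<partial>D)"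
    unfolding C_def by (rule nn_integral_bind[OF _ Nm]) (use fm in simp)
  also have "\<dots> = (\<integral>\<^sup>+t. ennreal (g ^ t) * (\<integral>\<^sup>+x. ennreal (f x) \<partial>N t) \<partial>count_space UNIV)"
    unfolding D_def by (rule nn_integral_density) auto
  also have "\<dots> = (\<Sum>t. ennreal (g ^ t) * (\<integral>\<^sup>+x. ennreal (f x) \<partial>N t))"
    by (rule nn_integral_count_space_nat)
  also have "\<dots> = (\<Sum>t. ennreal (g ^ t * integral\<^sup>L (N t) f))"
  proof -
    have "(\<integral>\<^sup>+x. ennreal (f x) \<partial>N t) = ennreal (integral\<^sup>L (N t) f)" for t
      by (rule nn_integral_eq_integral[OF pm_integrable[OF Npm f]])
         (use nn pm_space[OF Npm] in \<open>auto intro!: AE_I2\<close>)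
    moreover have "ennreal (g ^ t * integral\<^sup>L (N t) f) = ennreal (g ^ t) * ennreal (integral\<^sup>L (N t) f)" for t
      by (rule ennreal_mult) (use ib g0 in auto)
    ultimately show ?thesis by simp
  qed
  also have "\<dots> = ennreal (\<Sum>t. g ^ t * integral\<^sup>L (N t) f)"
    by (rule suminf_ennreal2[OF _ sm]) (use ib g0 in simp)
  finally have "integral\<^sup>L C f = (\<Sum>t. g ^ t * integral\<^sup>L (N t) f)"
    using suminf_nonneg[OF sm] ib g0 by simp
  then show "integral\<^sup>L (measure_of (space M) (sets M)
       (\<lambda>A. \<Sum>t. ennreal (g ^ t) * emeasure ((mPop p \<pi> ^^ t) \<mu>0) A)) f
     = (\<Sum>t. g ^ t * integral\<^sup>L ((mPop p \<pi> ^^ t) \<mu>0) f)"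
    using LC unfolding N_def by simp
qed


lemma resolvent: assumes pi: "\<pi> \<in> policies M" and mu: "pm M \<mu>"
  and D: "bnd M D" and e: "bnd M e" and ep: "bnd M \<epsilon>"
  and rec: "\<And>s. s \<in> space M \<Longrightarrow> D s = e s + g * Pop p \<pi> D s"
  and le: "\<And>s. s \<in> space M \<Longrightarrow> e s \<le> \<epsilon> s"
  shows "integral\<^sup>L \<mu> \<epsilon> + g * integral\<^sup>L \<mu> (Pop p \<pi> D)
    \<le> (\<Sum>t. g ^ t * integral\<^sup>L ((mPop p \<pi> ^^ t) \<mu>) (\<lambda>s. \<bar>\<epsilon> s\<bar>))"
proof -
  define N where "N t = (mPop p \<pi> ^^ t) \<mu>" for t
  define a where "a t = integral\<^sup>L (N t) (\<lambda>s. \<bar>\<epsilon> s\<bar>)" for t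
  have Npm: "pm M (N t)" for t unfolding N_def by (rule mPop_pow_pm[OF pi mu])
  have NSuc: "N (Suc t) = mPop p \<pi> (N t)" for t by (simp add: N_def)
  have N0: "N 0 = \<mu>" by (simp add: N_def)
  obtain BD where BD: "\<And>s. s \<in> space M \<Longrightarrow> \<bar>D s\<bar> \<le> BD" using D by (auto simp: bnd_def)
  have Dle: "integral\<^sup>L (N t) D \<le> BD" for t
    by (rule pm_integral_le_const[OF Npm D]) (use BD in \<open>auto dest: abs_le_D1\<close>)
  have PD: "bnd M (Pop p \<pi> D)" by (rule Pop_bnd[OF pi D])
  have ea: "bnd M (\<lambda>s. \<bar>\<epsilon> s\<bar>)" by (rule bnd_abs[OF ep])
  have step: "integral\<^sup>L (N t) D \<le> a t + g * integral\<^sup>L (N (Suc t)) D" for t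
  proof -
    have "integral\<^sup>L (N t) D = integral\<^sup>L (N t) (\<lambda>s. e s + g * Pop p \<pi> D s)"
      by (rule pm_integral_cong[OF Npm]) (rule rec)
    also have "\<dots> = integral\<^sup>L (N t) e + integral\<^sup>L (N t) (\<lambda>s. g * Pop p \<pi> D s)"
      by (rule pm_integral_add[OF Npm e bnd_cmult[OF PD]])
    also have "integral\<^sup>L (N t) (\<lambda>s. g * Pop p \<pi> D s) = g * integral\<^sup>L (N t) (Pop p \<pi> D)"
      by simp
    also have "integral\<^sup>L (N t) (Pop p \<pi> D) = integral\<^sup>L (N (Suc t)) D"
      unfolding NSuc by (rule integral_mPop[OF pi Npm D])
    also have "integral\<^sup>L (N t) e \<le> a t" unfolding a_def
      by (rule pm_integral_mono[OF Npm e ea]) (use le in \<open>force\<close>)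
    finally show ?thesis by simp
  qed
  have claim: "integral\<^sup>L (N 1) D \<le> (\<Sum>t<n. g ^ t * a (Suc t)) + g ^ n * integral\<^sup>L (N (Suc n)) D" for n
  proof (induction n)
    case (Suc n)
    have "g ^ n * integral\<^sup>L (N (Suc n)) D \<le> g ^ n * (a (Suc n) + g * integral\<^sup>L (N (Suc (Suc n))) D)"
      using step[of "Suc n"] g0 by (intro mult_left_mono) auto
    then show ?case using Suc.IH by (simp add: algebra_simps)
  qed simp
  have a_nn: "0 \<le> a t" for t unfolding a_def by (rule Bochner_Integration.integral_nonneg) simp
  have sm: "summable (\<lambda>t. g ^ t * a t)"
    using Lambda_integral(2)[OF pi mu ea] unfolding a_def N_def by simp
  define S where "S = (\<Sum>t. g ^ t * a t)"
  have X0: "integral\<^sup>L \<mu> \<epsilon> \<le> a 0" unfolding a_def N0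
    by (rule pm_integral_mono[OF mu ep ea]) auto
  have X1: "integral\<^sup>L \<mu> (Pop p \<pi> D) = integral\<^sup>L (N 1) D"
    using integral_mPop[OF pi mu D] by (simp add: N_def)
  have bound: "integral\<^sup>L \<mu> \<epsilon> + g * integral\<^sup>L \<mu> (Pop p \<pi> D) \<le> S + g ^ Suc n * BD" for n
  proof -
    have "g * integral\<^sup>L (N 1) D \<le> g * ((\<Sum>t<n. g ^ t * a (Suc t)) + g ^ n * integral\<^sup>L (N (Suc n)) D)"
      using claim[of n] g0 by (intro mult_left_mono) auto
    also have "\<dots> = (\<Sum>t<n. g ^ Suc t * a (Suc t)) + g ^ Suc n * integral\<^sup>L (N (Suc n)) D"
      by (simp add: sum_distrib_left algebra_simps)
    also have "g ^ Suc n * integral\<^sup>L (N (Suc n)) D \<le> g ^ Suc n * BD"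
      using Dle g0 by (intro mult_left_mono) auto
    finally have "integral\<^sup>L \<mu> \<epsilon> + g * integral\<^sup>L \<mu> (Pop p \<pi> D)
        \<le> a 0 + (\<Sum>t<n. g ^ Suc t * a (Suc t)) + g ^ Suc n * BD"
      using X0 X1 by simp
    also have "a 0 + (\<Sum>t<n. g ^ Suc t * a (Suc t)) = (\<Sum>t<Suc n. g ^ t * a t)"
      by (subst sum.lessThan_Suc_shift) simp
    also have "(\<Sum>t<Suc n. g ^ t * a t) \<le> S" unfolding S_def
      by (rule sum_le_suminf[OF sm]) (use a_nn g0 in auto)
    finally show ?thesis by simp
  qed
  have lim: "(\<lambda>n. S + g ^ Suc n * BD) \<longlonglongrightarrow> S + 0"
  proof -
    have gl: "(\<lambda>n. g ^ Suc n) \<longlonglongrightarrow> 0"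
      using LIMSEQ_Suc[OF LIMSEQ_realpow_zero[OF g0 g1]] by simp
    show ?thesis using tendsto_add[OF tendsto_const tendsto_mult_right_zero[OF gl], of S BD] by (simp add: ac_simps)
  qed
  have "integral\<^sup>L \<mu> \<epsilon> + g * integral\<^sup>L \<mu> (Pop p \<pi> D) \<le> S + 0"
    by (rule LIMSEQ_le_const[OF lim]) (use bound in auto)
  then show ?thesis unfolding S_def a_def N_def by simp
qed


lemma Tpi_bnd: assumes "\<pi> \<in> policies M" "bnd M V" shows "bnd M (Tpi p r g \<pi> V)"
proof -
  have e: "Tpi p r g \<pi> V = (\<lambda>s. r s (\<pi> s) + g * Pop p \<pi> V s)" by (rule ext) (simp add: Tpi_def)
  have "bnd M (\<lambda>s. r s (\<pi> s))"
    unfolding bnd_def using rp_meas[OF assms(1)] r_bnd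
    by (intro conjI exI[of _ Rmax]) (auto simp: abs_le_iff dest: r_bnd[of _ "\<pi> _"])
  then show ?thesis unfolding e by (intro bnd_add bnd_cmult Pop_bnd[OF assms])
qed

end

theorem lemma1:
  fixes M :: "'s measure" and p :: "'s \<Rightarrow> 'a::finite \<Rightarrow> 's measure"
    and r :: "'s \<Rightarrow> 'a \<Rightarrow> real" and Rmax g :: real
    and pistar :: "'s \<Rightarrow> 'a" and \<pi> :: "nat \<Rightarrow> 's \<Rightarrow> 'a"
    and \<nu> :: "'s measure" and d K :: nat
  assumes mdp: "mdp M p r Rmax g"
    and Vstar_F: "Vstar M p r g \<in> Fset M (Rmax / (1 - g))"
    and Vstar_fix: "\<forall>s\<in>space M. Topt p r g (Vstar M p r g) s = Vstar M p r g s"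
    and Vstar_unique: "\<forall>V\<in>Fset M (Rmax / (1 - g)).
                          (\<forall>s\<in>space M. Topt p r g V s = V s) \<longrightarrow> (\<forall>s\<in>space M. V s = Vstar M p r g s)"
    and pistar_pol: "pistar \<in> policies M"
    and pistar_greedy: "\<forall>s\<in>space M. Tpi p r g pistar (Vstar M p r g) s = Topt p r g (Vstar M p r g) s"
    and pistar_opt: "\<forall>s\<in>space M. Vpi p r g pistar s = Vstar M p r g s"
    and d: "d \<ge> 1"
    and nu: "prob_space \<nu>" "sets \<nu> = sets M"
    and pols: "\<forall>k\<le>K. \<pi> k \<in> policies M"
  shows "norm1 \<nu> (\<lambda>s. Vstar M p r g s - Vpi p r g (\<pi> K) s)
    \<le> g ^ (K * d) * supnorm M (\<lambda>s. Vstar M p r g s - Vpi p r g (\<pi> 0) s)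
      + (\<Sum>k=1..K. g ^ ((K - k) * d) *
           norm1 (Lambda M p g pistar (\<pi> k) ((K - k) * d) \<nu>)
             (\<lambda>s. (Topt p r g ^^ d) (Vpi p r g (\<pi> (k - 1))) s
                  - Tpi p r g (\<pi> k) (Vpi p r g (\<pi> (k - 1))) s))"
proof -
  interpret mdpL M p r Rmax g using mdp by (rule mdpL.intro)
  define Vs where "Vs = Vstar M p r g"
  define V where "V k = Vpi p r g (\<pi> k)" for k
  define mu where "mu n = (mPop p pistar ^^ n) \<nu>" for n
  define eps where "eps k = (\<lambda>s. (Topt p r g ^^ d) (V (k - 1)) s - Tpi p r g (\<pi> k) (V (k - 1)) s)" for k
  define Lam where "Lam k n = Lambda M p g pistar (\<pi> k) n \<nu>" for k n
  have numu: "pm M \<nu>" using nu by (simp add: pm_def)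
  have mupm: "pm M (mu n)" for n unfolding mu_def by (rule mPop_pow_pm[OF pistar_pol numu])
  have Vs_bnd: "bnd M Vs"
    using Vstar_F unfolding Vs_def Fset_def bnd_def
    by (intro conjI exI[of _ "Rmax / (1 - g)"]) auto
  have Vs_fix: "\<And>s. s \<in> space M \<Longrightarrow> Tpi p r g pistar Vs s = Vs s"
    using pistar_greedy Vstar_fix unfolding Vs_def by auto
  have polk: "k \<le> K \<Longrightarrow> \<pi> k \<in> policies M" for k using pols by auto
  have V_bnd: "k \<le> K \<Longrightarrow> bnd M (V k)" for k unfolding V_def by (rule Vpi_bnd[OF polk])
  have Vs_ge: "V k s \<le> Vs s" if "k \<le> K" "s \<in> space M" for k s
  proof -
    have "bdd_above ((\<lambda>\<pi>'. Vpi p r g \<pi>' s) ` policies M)"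
      by (rule bdd_aboveI2[where M="Rmax / (1 - g)"]) (use Vpi_bounds that(2) in auto)
    then show ?thesis unfolding V_def Vs_def Vstar_def
      by (rule cSUP_upper[OF polk[OF that(1)]])
  qed
  have eps_bnd: "bnd M (eps k)" if "1 \<le> k" "k \<le> K" for k
    unfolding eps_def using that
    by (intro bnd_diff Toptpow_bnd V_bnd Tpi_bnd polk) auto
  have Lam_eq: "norm1 (Lam k n) (eps k)
      = (\<Sum>t. g ^ t * integral\<^sup>L ((mPop p (\<pi> k) ^^ t) (mu n)) (\<lambda>s. \<bar>eps k s\<bar>))"
    if "1 \<le> k" "k \<le> K" for k n
    unfolding norm1_def Lam_def Lambda_def mu_def
    by (rule Lambda_integral(1)[OF polk[OF that(2)] mPop_pow_pm[OF pistar_pol numu]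
          bnd_abs[OF eps_bnd[OF that]]]) auto
  have main: "k \<le> K \<Longrightarrow> integral\<^sup>L (mu n) (\<lambda>s. Vs s - V k s)
      \<le> g ^ (k * d) * integral\<^sup>L (mu (n + k * d)) (\<lambda>s. Vs s - V 0 s)
        + (\<Sum>j=1..k. g ^ ((k - j) * d) * norm1 (Lam j (n + (k - j) * d)) (eps j))" for k n
  proof (induction k arbitrary: n)
    case 0
    then show ?case by simp
  next
    case (Suc k)
    have kK: "k \<le> K" "Suc k \<le> K" using Suc.prems by auto
    have pk1: "\<pi> (Suc k) \<in> policies M" by (rule polk[OF kK(2)])
    have Vk: "bnd M (V k)" by (rule V_bnd[OF kK(1)])
    have Vk1: "bnd M (V (Suc k))" by (rule V_bnd[OF kK(2)])
    define D where "D = (\<lambda>s. V k s - V (Suc k) s)"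
    define e where "e = (\<lambda>s. V k s - Tpi p r g (\<pi> (Suc k)) (V k) s)"
    define Q where "Q = (Pop p pistar ^^ d) (\<lambda>x. Vs x - V k x)"
    have epsS: "eps (Suc k) = (\<lambda>s. (Topt p r g ^^ d) (V k) s - Tpi p r g (\<pi> (Suc k)) (V k) s)"
      by (simp add: eps_def)
    have Db: "bnd M D" unfolding D_def by (rule bnd_diff[OF Vk Vk1])
    have eb: "bnd M e" unfolding e_def by (rule bnd_diff[OF Vk Tpi_bnd[OF pk1 Vk]])
    have Qb: "bnd M Q" unfolding Q_def by (rule Ppow_bnd[OF pistar_pol bnd_diff[OF Vs_bnd Vk]])
    have epb: "bnd M (eps (Suc k))" by (rule eps_bnd) (use kK in auto)
    have PDb: "bnd M (Pop p (\<pi> (Suc k)) D)" by (rule Pop_bnd[OF pk1 Db])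
    have TV: "Tpi p r g (\<pi> (Suc k)) (V k) s - V (Suc k) s = g * Pop p (\<pi> (Suc k)) D s"
      if s: "s \<in> space M" for s
    proof -
      have "V (Suc k) s = Tpi p r g (\<pi> (Suc k)) (V (Suc k)) s"
        unfolding V_def using Vpi_fix[OF pk1 s] by simp
      then show ?thesis using Tpi_diff[OF Vk Vk1 s, of "\<pi> (Suc k)"] unfolding D_def by simp
    qed
    have ch: "Vs s - (Topt p r g ^^ d) (V k) s \<le> g ^ d * Q s" if s: "s \<in> space M" for s
      using chain[OF pistar_pol Vs_bnd Vs_fix Vk, of d] s unfolding Q_def by auto
    have pw: "Vs s - V (Suc k) s \<le> g ^ d * Q s + eps (Suc k) s + g * Pop p (\<pi> (Suc k)) D s"
      if s: "s \<in> space M" for s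
      using ch[OF s] TV[OF s] unfolding epsS by simp
    have rec: "D s = e s + g * Pop p (\<pi> (Suc k)) D s" if s: "s \<in> space M" for s
      using TV[OF s] unfolding D_def e_def by simp
    have ele: "e s \<le> eps (Suc k) s" if s: "s \<in> space M" for s
      using Vpi_le_Toptpow[OF polk[OF kK(1)], of d] s unfolding e_def epsS V_def by auto
    have R: "integral\<^sup>L (mu n) (eps (Suc k)) + g * integral\<^sup>L (mu n) (Pop p (\<pi> (Suc k)) D)
        \<le> norm1 (Lam (Suc k) n) (eps (Suc k))"
      using resolvent[OF pk1 mupm Db eb epb rec ele] Lam_eq[of "Suc k" n] kK by simp
    have hb: "bnd M (\<lambda>s. g ^ d * Q s + eps (Suc k) s + g * Pop p (\<pi> (Suc k)) D s)"
      by (intro bnd_add bnd_cmult Qb epb PDb)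
    have I1: "integral\<^sup>L (mu n) (\<lambda>s. Vs s - V (Suc k) s)
        \<le> integral\<^sup>L (mu n) (\<lambda>s. g ^ d * Q s + eps (Suc k) s + g * Pop p (\<pi> (Suc k)) D s)"
      by (rule pm_integral_mono[OF mupm bnd_diff[OF Vs_bnd Vk1] hb pw])
    have I2: "integral\<^sup>L (mu n) (\<lambda>s. g ^ d * Q s + eps (Suc k) s + g * Pop p (\<pi> (Suc k)) D s)
        = g ^ d * integral\<^sup>L (mu n) Q + integral\<^sup>L (mu n) (eps (Suc k))
          + g * integral\<^sup>L (mu n) (Pop p (\<pi> (Suc k)) D)"
    proof -
      have "integral\<^sup>L (mu n) (\<lambda>s. g ^ d * Q s + eps (Suc k) s + g * Pop p (\<pi> (Suc k)) D s)
          = integral\<^sup>L (mu n) (\<lambda>s. g ^ d * Q s + eps (Suc k) s)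
            + integral\<^sup>L (mu n) (\<lambda>s. g * Pop p (\<pi> (Suc k)) D s)"
        by (rule pm_integral_add[OF mupm bnd_add[OF bnd_cmult[OF Qb] epb] bnd_cmult[OF PDb]])
      also have "integral\<^sup>L (mu n) (\<lambda>s. g ^ d * Q s + eps (Suc k) s)
          = integral\<^sup>L (mu n) (\<lambda>s. g ^ d * Q s) + integral\<^sup>L (mu n) (eps (Suc k))"
        by (rule pm_integral_add[OF mupm bnd_cmult[OF Qb] epb])
      finally show ?thesis by simp
    qed
    have I3: "integral\<^sup>L (mu n) Q = integral\<^sup>L (mu (d + n)) (\<lambda>s. Vs s - V k s)"
    proof -
      have "integral\<^sup>L (mu n) Q = integral\<^sup>L ((mPop p pistar ^^ d) (mu n)) (\<lambda>s. Vs s - V k s)"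
        unfolding Q_def by (rule integral_Ppow[OF pistar_pol mupm bnd_diff[OF Vs_bnd Vk]])
      also have "(mPop p pistar ^^ d) (mu n) = mu (d + n)" by (simp add: mu_def funpow_add)
      finally show ?thesis .
    qed
    have IH: "integral\<^sup>L (mu (d + n)) (\<lambda>s. Vs s - V k s)
      \<le> g ^ (k * d) * integral\<^sup>L (mu (d + n + k * d)) (\<lambda>s. Vs s - V 0 s)
        + (\<Sum>j=1..k. g ^ ((k - j) * d) * norm1 (Lam j (d + n + (k - j) * d)) (eps j))"
      using Suc.IH[of "d + n"] kK by simp
    have gd: "0 \<le> g ^ d" using g0 by simp
    have h1: "g ^ d * g ^ (k * d) = g ^ (Suc k * d)" by (simp add: power_add[symmetric])
    have h2: "mu (d + n + k * d) = mu (n + Suc k * d)" by (simp add: algebra_simps)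
    have h3: "(\<Sum>j=1..Suc k. g ^ ((Suc k - j) * d) * norm1 (Lam j (n + (Suc k - j) * d)) (eps j))
      = g ^ d * (\<Sum>j=1..k. g ^ ((k - j) * d) * norm1 (Lam j (d + n + (k - j) * d)) (eps j))
        + norm1 (Lam (Suc k) n) (eps (Suc k))"
    proof -
      have "(\<Sum>j=1..Suc k. g ^ ((Suc k - j) * d) * norm1 (Lam j (n + (Suc k - j) * d)) (eps j))
        = (\<Sum>j=1..k. g ^ ((Suc k - j) * d) * norm1 (Lam j (n + (Suc k - j) * d)) (eps j))
          + norm1 (Lam (Suc k) n) (eps (Suc k))"
        by (subst sum.cl_ivl_Suc) simp
      also have "(\<Sum>j=1..k. g ^ ((Suc k - j) * d) * norm1 (Lam j (n + (Suc k - j) * d)) (eps j))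
        = g ^ d * (\<Sum>j=1..k. g ^ ((k - j) * d) * norm1 (Lam j (d + n + (k - j) * d)) (eps j))"
        unfolding sum_distrib_left
      proof (rule sum.cong[OF refl])
        fix j assume j: "j \<in> {1..k}"
        then have sj: "Suc k - j = Suc (k - j)" by auto
        show "g ^ ((Suc k - j) * d) * norm1 (Lam j (n + (Suc k - j) * d)) (eps j)
          = g ^ d * (g ^ ((k - j) * d) * norm1 (Lam j (d + n + (k - j) * d)) (eps j))"
          unfolding sj by (simp add: power_add algebra_simps)
      qed
      finally show ?thesis .
    qed
    have "integral\<^sup>L (mu n) (\<lambda>s. Vs s - V (Suc k) s)
        \<le> g ^ d * integral\<^sup>L (mu (d + n)) (\<lambda>s. Vs s - V k s) + norm1 (Lam (Suc k) n) (eps (Suc k))"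
      using I1 I2 I3 R by simp
    also have "\<dots> \<le> g ^ d * (g ^ (k * d) * integral\<^sup>L (mu (d + n + k * d)) (\<lambda>s. Vs s - V 0 s)
        + (\<Sum>j=1..k. g ^ ((k - j) * d) * norm1 (Lam j (d + n + (k - j) * d)) (eps j)))
        + norm1 (Lam (Suc k) n) (eps (Suc k))"
      using mult_left_mono[OF IH gd] by simp
    also have "\<dots> = g ^ (Suc k * d) * integral\<^sup>L (mu (n + Suc k * d)) (\<lambda>s. Vs s - V 0 s)
        + (\<Sum>j=1..Suc k. g ^ ((Suc k - j) * d) * norm1 (Lam j (n + (Suc k - j) * d)) (eps j))"
      unfolding h3 h2[symmetric] h1[symmetric] by (simp add: algebra_simps)
    finally show ?case .
  qed
  have M0: "integral\<^sup>L \<nu> (\<lambda>s. Vs s - V K s)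
      \<le> g ^ (K * d) * integral\<^sup>L (mu (K * d)) (\<lambda>s. Vs s - V 0 s)
        + (\<Sum>j=1..K. g ^ ((K - j) * d) * norm1 (Lam j ((K - j) * d)) (eps j))"
    using main[of K 0] by (simp add: mu_def)
  have L: "norm1 \<nu> (\<lambda>s. Vs s - V K s) = integral\<^sup>L \<nu> (\<lambda>s. Vs s - V K s)"
    unfolding norm1_def by (rule pm_integral_cong[OF numu]) (use Vs_ge in auto)
  have VsV0: "bnd M (\<lambda>s. Vs s - V 0 s)" by (rule bnd_diff[OF Vs_bnd V_bnd]) simp
  obtain B where B: "\<And>s. s \<in> space M \<Longrightarrow> \<bar>Vs s - V 0 s\<bar> \<le> B" using VsV0 by (auto simp: bnd_def)
  have Sup: "integral\<^sup>L (mu (K * d)) (\<lambda>s. Vs s - V 0 s) \<le> supnorm M (\<lambda>s. Vs s - V 0 s)"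
  proof (rule pm_integral_le_const[OF mupm VsV0])
    fix s assume s: "s \<in> space M"
    have "bdd_above ((\<lambda>s. \<bar>Vs s - V 0 s\<bar>) ` space M)"
      by (rule bdd_aboveI2[where M=B]) (rule B)
    then have "\<bar>Vs s - V 0 s\<bar> \<le> supnorm M (\<lambda>s. Vs s - V 0 s)"
      unfolding supnorm_def by (rule cSUP_upper[OF s])
    then show "Vs s - V 0 s \<le> supnorm M (\<lambda>s. Vs s - V 0 s)" by simp
  qed
  have "norm1 \<nu> (\<lambda>s. Vs s - V K s)
      \<le> g ^ (K * d) * supnorm M (\<lambda>s. Vs s - V 0 s)
        + (\<Sum>j=1..K. g ^ ((K - j) * d) * norm1 (Lam j ((K - j) * d)) (eps j))"
    using M0 mult_left_mono[OF Sup, of "g ^ (K * d)"] g0 unfolding L by simp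
  then show ?thesis unfolding Vs_def V_def eps_def Lam_def .
qed

end
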